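(* Let $\sigma_i:\mathbb{R}\to\mathbb{R}$ be a function that is bounded, twice continuously differentiable, has strictly positive first derivative at every point, has exactly one inflection point, located at $0$, satisfies $\sigma_i(0)=0$, $\sigma_i'(0)=1$, is Lipschitz continuous with Lipschitz constant $1$, and satisfies $\sigma_i(v)\in[-1,1]$ for all $v\in\mathbb{R}$. For $v_i,\Delta v_i\in\mathbb{R}$ define $\Delta s_i=\sigma_i(v_i+\Delta v_i)-\sigma_i(v_i)$. Then there exists a continuous, strictly monotonically decreasing function $\bar v_i:(0,1)\to(0,+\infty)$ with $\bar v_i(\lambda)\to+\infty$ as $\lambda\to0^+$ and $\bar v_i(\lambda)\to0$ as $\lambda\to1^-$, such that for every $\lambda_i\in(0,1)$, $$(\Delta v_i-\Delta s_i)(\Delta s_i-\lambda_i\Delta v_i)\geq 0$$ for all pairs $(v_i,v_i+\Delta v_i)\in[-\bar v_i(\lambda_i),\bar v_i(\lambda_i)]^2$. Moreover, for $\lambda_i=0$ the inequality $(\Delta v_i-\Delta s_i)\Delta s_i\geq0$ holds for all $(v_i,v_i+\Delta v_i)\in\mathbb{R}^2$. *)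

theory Defs
  imports "HOL-Analysis.Analysis"
begin

definition twice_cont_diff :: "(real \<Rightarrow> real) \<Rightarrow> bool" where
  "twice_cont_diff f \<longleftrightarrow>
     (\<forall>x. f differentiable (at x)) \<and>
     (\<forall>x. (deriv f) differentiable (at x)) \<and>
     continuous_on UNIV (deriv (deriv f))"

definition inflection_point :: "(real \<Rightarrow> real) \<Rightarrow> real \<Rightarrow> bool" where
  "inflection_point f x \<longleftrightarrow>
     (\<exists>e>0. (convex_on {x - e..x} f \<and> concave_on {x..x + e} f) \<or>
            (concave_on {x - e..x} f \<and> convex_on {x..x + e} f))"

end

theory Submission imports Defs begin

definition mfun :: "(real \<Rightarrow> real) \<Rightarrow> real \<Rightarrow> real" where
  "mfun d v = Inf ((\<lambda>t. d (t * v)) ` {-1..1})"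

lemma mfun_bdd: assumes "\<And>x. d x > 0" shows "bdd_below ((\<lambda>t. d (t * v)) ` {-1..1})"
  using assms by (intro bdd_belowI[of _ 0]) (auto intro: less_imp_le)

lemma mfun_le:
  assumes "\<And>x. d x > 0" "\<bar>x\<bar> \<le> \<bar>v\<bar>"
  shows "mfun d v \<le> d x"
proof -
  define t where "t = (if v = 0 then 0 else x / v)"
  have tv: "x = t * v" using assms(2) by (auto simp: t_def)
  have "t \<in> {-1..1}"
    using assms(2) by (auto simp: t_def abs_le_iff divide_simps split: if_splits)
  then show ?thesis unfolding mfun_def tv
    by (intro cInf_lower mfun_bdd assms(1)) auto
qed

lemma mfun_ge:
  assumes "\<And>t. t \<in> {-1..1} \<Longrightarrow> c \<le> d (t * v)"
  shows "c \<le> mfun d v"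
  unfolding mfun_def using assms by (intro cInf_greatest) auto

lemma mfun_pos:
  assumes "\<And>x. d x > 0" "continuous_on UNIV d"
  shows "mfun d v > 0"
proof -
  have "continuous_on {-1..1} (\<lambda>t. d (t * v))"
    by (intro continuous_on_compose2[OF assms(2)] continuous_intros) auto
  then obtain t where t: "t \<in> {-1..1}" "\<forall>s\<in>{-1..1}. d (t * v) \<le> d (s * v)"
    using continuous_attains_inf[of "{-1..1::real}" "\<lambda>t. d (t * v)"] by auto
  have "d (t * v) \<le> mfun d v" using t by (intro mfun_ge) auto
  then show ?thesis using assms(1)[of "t * v"] by linarith
qed

lemma mfun_mono:
  assumes "\<And>x. d x > 0" "0 \<le> a" "a \<le> b"
  shows "mfun d b \<le> mfun d a"
proof (rule mfun_ge)
  fix t :: real assume "t \<in> {-1..1}"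
  then have "\<bar>t\<bar> * a \<le> a" using assms by (intro mult_left_le_one_le) auto
  then have "\<bar>t * a\<bar> \<le> \<bar>b\<bar>" using assms by (simp add: abs_mult)
  then show "mfun d b \<le> d (t * a)" by (rule mfun_le[OF assms(1)])
qed

lemma mfun_0: "mfun d 0 = d 0"
  unfolding mfun_def by simp

lemma mfun_cont:
  assumes "\<And>x. d x > 0" "continuous_on UNIV d"
  shows "isCont (mfun d) v0"
  unfolding continuous_at_eps_delta
proof (intro allI impI)
  fix e :: real assume e: "e > 0"
  define S where "S = cball (0::real) (\<bar>v0\<bar> + 1)"
  have "uniformly_continuous_on S d"
    by (rule compact_uniformly_continuous) (auto simp: S_def intro: continuous_on_subset[OF assms(2)])
  then obtain r where r: "r > 0" "\<forall>x\<in>S. \<forall>x'\<in>S. dist x' x < r \<longrightarrow> dist (d x') (d x) < e/2"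
    using e unfolding uniformly_continuous_on_def by (meson half_gt_zero)
  show "\<exists>\<delta>>0. \<forall>x'. dist x' v0 < \<delta> \<longrightarrow> dist (mfun d x') (mfun d v0) < e"
  proof (intro exI[of _ "min 1 r"] conjI allI impI)
    show "min 1 r > 0" using r by auto
    fix v assume "dist v v0 < min 1 r"
    then have vv: "\<bar>v - v0\<bar> < 1" "\<bar>v - v0\<bar> < r" by (auto simp: dist_real_def)
    have close: "\<bar>d (t * v) - d (t * v0)\<bar> < e/2" if t: "t \<in> {-1..1}" for t
    proof -
      have at: "\<bar>t\<bar> \<le> 1" using t by auto
      have "\<bar>t * v\<bar> \<le> \<bar>v\<bar>" "\<bar>t * v0\<bar> \<le> \<bar>v0\<bar>" using at
        by (auto simp: abs_mult intro: mult_left_le_one_le)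
      then have "t * v \<in> S" "t * v0 \<in> S" using vv by (auto simp: S_def)
      moreover have "\<bar>t * v - t * v0\<bar> < r"
      proof -
        have "\<bar>t * v - t * v0\<bar> = \<bar>t\<bar> * \<bar>v - v0\<bar>" by (simp add: abs_mult[symmetric] algebra_simps)
        also have "\<dots> \<le> \<bar>v - v0\<bar>" using at by (auto intro: mult_left_le_one_le)
        finally show ?thesis using vv by linarith
      qed
      ultimately show ?thesis using r(2) by (auto simp: dist_real_def)
    qed
    have "mfun d v - e/2 \<le> mfun d v0"
    proof (rule mfun_ge)
      fix t :: real assume t: "t \<in> {-1..1}"
      have "mfun d v \<le> d (t * v)" using t by (intro mfun_le[OF assms(1)]) (auto simp: abs_mult intro: mult_left_le_one_le)
      then show "mfun d v - e/2 \<le> d (t * v0)" using close[OF t] by linarith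
    qed
    moreover have "mfun d v0 - e/2 \<le> mfun d v"
    proof (rule mfun_ge)
      fix t :: real assume t: "t \<in> {-1..1}"
      have "mfun d v0 \<le> d (t * v0)" using t by (intro mfun_le[OF assms(1)]) (auto simp: abs_mult intro: mult_left_le_one_le)
      then show "mfun d v0 - e/2 \<le> d (t * v)" using close[OF t] by linarith
    qed
    ultimately show "dist (mfun d v) (mfun d v0) < e" using e by (auto simp: dist_real_def)
  qed
qed

theorem lemma2:
  fixes \<sigma> :: "real \<Rightarrow> real"
  assumes bnd: "bounded (range \<sigma>)"
    and c2: "twice_cont_diff \<sigma>"
    and pos: "\<And>x. deriv \<sigma> x > 0"
    and infl: "{x. inflection_point \<sigma> x} = {0}"
    and zero: "\<sigma> 0 = 0"
    and d0: "deriv \<sigma> 0 = 1"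
    and lip: "1-lipschitz_on UNIV \<sigma>"
    and rng: "\<And>v. \<sigma> v \<in> {-1..1}"
  shows "(\<exists>vb :: real \<Rightarrow> real.
            continuous_on {0<..<1} vb \<and>
            (\<forall>a\<in>{0<..<1}. \<forall>b\<in>{0<..<1}. a < b \<longrightarrow> vb b < vb a) \<and>
            (\<forall>l\<in>{0<..<1}. vb l > 0) \<and>
            filterlim vb at_top (at_right 0) \<and>
            (vb \<longlongrightarrow> 0) (at_left 1) \<and>
            (\<forall>l\<in>{0<..<1}. \<forall>v dv.
               v \<in> {- vb l..vb l} \<and> v + dv \<in> {- vb l..vb l} \<longrightarrow>
               (dv - (\<sigma> (v + dv) - \<sigma> v)) * ((\<sigma> (v + dv) - \<sigma> v) - l * dv) \<ge> 0))
         \<and> (\<forall>v dv. (dv - (\<sigma> (v + dv) - \<sigma> v)) * (\<sigma> (v + dv) - \<sigma> v) \<ge> 0)"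
proof -
  define d where "d = deriv \<sigma>"
  have dpos: "\<And>x. d x > 0" using pos by (simp add: d_def)
  have der: "\<And>x. (\<sigma> has_real_derivative d x) (at x)"
    using c2 unfolding twice_cont_diff_def d_def
    by (simp add: DERIV_deriv_iff_real_differentiable)
  have dcont: "continuous_on UNIV d"
    using c2 unfolding twice_cont_diff_def d_def
    by (intro continuous_at_imp_continuous_on ballI differentiable_imp_continuous_within) auto
  have dle: "d x \<le> 1" for x
  proof -
    have lim: "((\<lambda>h. (\<sigma> (x + h) - \<sigma> x) / h) \<longlongrightarrow> d x) (at 0)"
      using der[of x] by (simp add: DERIV_def)
    have "eventually (\<lambda>h. (\<sigma> (x + h) - \<sigma> x) / h \<le> 1) (at 0)"
    proof (rule eventually_at_topological[THEN iffD2], intro exI[of _ UNIV] conjI ballI impI; simp?)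
      fix h :: real assume "h \<noteq> 0"
      have "dist (\<sigma> (x + h)) (\<sigma> x) \<le> 1 * dist (x + h) x"
        using lip by (intro lipschitz_onD) auto
      then have "\<bar>\<sigma> (x + h) - \<sigma> x\<bar> \<le> \<bar>h\<bar>" by (simp add: dist_real_def)
      then show "(\<sigma> (x + h) - \<sigma> x) / h \<le> 1" using \<open>h \<noteq> 0\<close>
        by (auto simp: divide_simps abs_le_iff split: if_splits)
    qed
    then show ?thesis using tendsto_upperbound[OF lim] by simp
  qed
  have mvt: "\<exists>\<xi>. min v (v + dv) \<le> \<xi> \<and> \<xi> \<le> max v (v + dv) \<and> \<sigma> (v + dv) - \<sigma> v = d \<xi> * dv" for v dv
  proof (cases "dv = 0")
    case True then show ?thesis by auto
  next
    case False
    show ?thesis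
    proof (cases "dv > 0")
      case True
      obtain z where "v < z" "z < v + dv" "\<sigma> (v + dv) - \<sigma> v = (v + dv - v) * d z"
        using MVT2[of v "v + dv" \<sigma> d] der True by auto
      then show ?thesis using True by (intro exI[of _ z]) auto
    next
      case F2: False
      then have "dv < 0" using False by auto
      obtain z where "v + dv < z" "z < v" "\<sigma> v - \<sigma> (v + dv) = (v - (v + dv)) * d z"
        using MVT2[of "v + dv" v \<sigma> d] der \<open>dv < 0\<close> by auto
      then show ?thesis using \<open>dv < 0\<close> by (intro exI[of _ z]) (auto simp: algebra_simps)
    qed
  qed
  define h where "h v = mfun d v / (1 + v)" for v
  have m0: "mfun d 0 = 1" using d0 by (simp add: mfun_0 d_def)
  have mle1: "mfun d v \<le> 1" for v
  proof -
    have "mfun d v \<le> d 0" by (rule mfun_le[OF dpos]) simp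
    then show ?thesis using d0 by (simp add: d_def)
  qed
  have mpos: "mfun d v > 0" for v by (rule mfun_pos[OF dpos dcont])
  have h0: "h 0 = 1" using m0 by (simp add: h_def)
  have hpos: "v \<ge> 0 \<Longrightarrow> h v > 0" for v using mpos[of v] by (simp add: h_def)
  have hcont: "v \<ge> 0 \<Longrightarrow> isCont h v" for v
    unfolding h_def by (intro continuous_intros mfun_cont[OF dpos dcont]) auto
  have hstrict: "0 \<le> a \<Longrightarrow> a < b \<Longrightarrow> h b < h a" for a b
  proof -
    assume ab: "0 \<le> a" "a < b"
    have "mfun d b \<le> mfun d a" using ab by (intro mfun_mono[OF dpos]) auto
    moreover have "mfun d b / (1 + b) < mfun d b / (1 + a)"
      using ab mpos[of b] by (intro divide_strict_left_mono) auto
    moreover have "mfun d b / (1 + a) \<le> mfun d a / (1 + a)"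
      using ab calculation(1) by (intro divide_right_mono) auto
    ultimately show "h b < h a" by (simp add: h_def)
  qed
  have hle: "v \<ge> 0 \<Longrightarrow> h v \<le> 1 / (1 + v)" for v
    using mle1[of v] by (simp add: h_def divide_right_mono)
  have hm: "v \<ge> 0 \<Longrightarrow> h v \<le> mfun d v" for v
    using mpos[of v] by (simp add: h_def divide_simps mult_le_cancel_left1 del: mfun_def)
  have uniq: "0 \<le> a \<Longrightarrow> 0 \<le> b \<Longrightarrow> h a = h b \<Longrightarrow> a = b" for a b
    by (cases a b rule: linorder_cases) (auto dest: hstrict)
  have ex: "\<exists>v\<ge>0. h v = l" if l: "0 < l" "l \<le> 1" for l
  proof -
    have "h (1 / l) \<le> 1 / (1 + 1 / l)" using l by (intro hle) auto
    also have "\<dots> \<le> l" using l by (simp add: divide_simps)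
    finally have "h (1/l) \<le> l" .
    then obtain x where "0 \<le> x" "x \<le> 1/l" "h x = l"
      using IVT2[of h "1/l" l 0] h0 l hcont by auto
    then show ?thesis by auto
  qed
  define vb where "vb l = (THE v. 0 \<le> v \<and> h v = l)" for l
  have vb: "0 \<le> vb l \<and> h (vb l) = l" if lh: "0 < l" "l \<le> 1" for l
  proof -
    obtain w where w: "0 \<le> w" "h w = l" using ex[OF lh] by blast
    have "(THE v. 0 \<le> v \<and> h v = l) = w"
      by (rule the_equality) (use w uniq in auto)
    then show ?thesis using w by (simp add: vb_def)
  qed
  have vb_inv: "0 \<le> v \<Longrightarrow> vb (h v) = v" for v
  proof -
    assume v: "0 \<le> v"
    have "h v \<le> 1" using h0 hstrict[of 0 v] v by (cases "v = 0") auto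
    then have "0 \<le> vb (h v) \<and> h (vb (h v)) = h v" using vb hpos v by blast
    then show "vb (h v) = v" using uniq v by blast
  qed
  have vbpos: "0 < l \<Longrightarrow> l < 1 \<Longrightarrow> vb l > 0" for l
    using vb[of l] h0 by (cases "vb l = 0") auto
  have part2: "(dv - (\<sigma> (v + dv) - \<sigma> v)) * (\<sigma> (v + dv) - \<sigma> v) \<ge> 0" for v dv
  proof -
    obtain \<xi> where se: "\<sigma> (v + dv) - \<sigma> v = d \<xi> * dv" using mvt by blast
    have eq: "(dv - d \<xi> * dv) * (d \<xi> * dv) = dv\<^sup>2 * ((1 - d \<xi>) * d \<xi>)"
      by (simp add: power2_eq_square algebra_simps)
    have "(1 - d \<xi>) * d \<xi> \<ge> 0" using dle[of \<xi>] dpos[of \<xi>] by simp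
    then have "0 \<le> dv\<^sup>2 * ((1 - d \<xi>) * d \<xi>)" by simp
    then show ?thesis unfolding se eq .
  qed
  have part1: "(dv - (\<sigma> (v + dv) - \<sigma> v)) * ((\<sigma> (v + dv) - \<sigma> v) - l * dv) \<ge> 0"
    if l: "l \<in> {0<..<1}" and vv: "v \<in> {- vb l..vb l} \<and> v + dv \<in> {- vb l..vb l}" for l v dv
  proof -
    obtain \<xi> where xi: "min v (v + dv) \<le> \<xi>" "\<xi> \<le> max v (v + dv)" "\<sigma> (v + dv) - \<sigma> v = d \<xi> * dv"
      using mvt by blast
    have vbl: "0 \<le> vb l" "h (vb l) = l" using vb[of l] l by auto
    have "\<bar>\<xi>\<bar> \<le> \<bar>vb l\<bar>" using xi(1,2) vv vbl by auto
    then have "mfun d (vb l) \<le> d \<xi>" by (rule mfun_le[OF dpos])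
    moreover have "l \<le> mfun d (vb l)" using hm[of "vb l"] vbl by simp
    ultimately have ld: "l \<le> d \<xi>" by simp
    have eq: "(dv - d \<xi> * dv) * (d \<xi> * dv - l * dv) = dv\<^sup>2 * ((1 - d \<xi>) * (d \<xi> - l))"
      by (simp add: power2_eq_square algebra_simps)
    have "(1 - d \<xi>) * (d \<xi> - l) \<ge> 0" using dle[of \<xi>] ld by simp
    then have "0 \<le> dv\<^sup>2 * ((1 - d \<xi>) * (d \<xi> - l))" by simp
    then show ?thesis unfolding xi(3) eq .
  qed
  have mono: "vb b < vb a" if "a \<in> {0<..<1}" "b \<in> {0<..<1}" "a < b" for a b
  proof (rule ccontr)
    assume "\<not> vb b < vb a"
    then have "h (vb b) \<le> h (vb a)" using vb[of a] that hstrict[of "vb a" "vb b"]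
      by (cases "vb a = vb b") auto
    then show False using vb[of a] vb[of b] that by auto
  qed
  have cont: "continuous_on {0<..<1} vb"
  proof (rule continuous_at_imp_continuous_on, rule ballI)
    fix l :: real assume l: "l \<in> {0<..<1}"
    define x where "x = vb l"
    have x: "x > 0" "h x = l" using vbpos[of l] vb[of l] l by (auto simp: x_def)
    have "isCont vb (h x)"
    proof (rule isCont_inverse_function[where d="x/2" and f=h and g=vb and x=x])
      show "0 < x/2" using x by simp
      fix z assume "\<bar>z - x\<bar> \<le> x/2"
      then have z: "0 \<le> z" using x by arith
      show "vb (h z) = z" using vb_inv[OF z] .
      show "isCont h z" using hcont[OF z] .
    qed
    then show "isCont vb l" using x by simp
  qed
  have lim0: "filterlim vb at_top (at_right 0)"
    unfolding filterlim_at_top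
  proof
    fix Z :: real
    define B where "B = max Z 0"
    have hB: "h B > 0" by (rule hpos) (simp add: B_def)
    show "eventually (\<lambda>x. Z \<le> vb x) (at_right 0)"
      unfolding eventually_at_right_field
    proof (intro exI[of _ "min (h B) 1"] conjI allI impI)
      show "0 < min (h B) 1" using hB by simp
      fix y :: real assume y: "0 < y" "y < min (h B) 1"
      have v: "0 \<le> vb y" "h (vb y) = y" using vb[of y] y by auto
      show "Z \<le> vb y"
      proof (rule ccontr)
        assume "\<not> Z \<le> vb y"
        then have "vb y < B" by (simp add: B_def)
        then have "h B < h (vb y)" using v by (intro hstrict) auto
        then show False using v y by simp
      qed
    qed
  qed
  have lim1: "(vb \<longlongrightarrow> 0) (at_left 1)"
  proof (rule tendstoI)
    fix e :: real assume e: "e > 0"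
    have he: "h (e/2) < 1" using hstrict[of 0 "e/2"] h0 e by simp
    show "eventually (\<lambda>x. dist (vb x) 0 < e) (at_left 1)"
      unfolding eventually_at_left_field
    proof (intro exI[of _ "max (h (e/2)) 0"] conjI allI impI)
      show "max (h (e/2)) 0 < 1" using he by simp
      fix y :: real assume y: "max (h (e/2)) 0 < y" "y < 1"
      have v: "0 \<le> vb y" "h (vb y) = y" using vb[of y] y by auto
      have "vb y < e/2"
      proof (rule ccontr)
        assume "\<not> vb y < e/2"
        then have "h (vb y) \<le> h (e/2)" using hstrict[of "e/2" "vb y"] e
          by (cases "vb y = e/2") auto
        then show False using v y by simp
      qed
      then show "dist (vb y) 0 < e" using v e by (simp add: dist_real_def)
    qed
  qed
  show ?thesis
  proof (intro conjI exI[of _ vb] cont lim0 lim1 ballI allI impI)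
    show "vb b < vb a" if "a \<in> {0<..<1}" "b \<in> {0<..<1}" "a < b" for a b
      using mono[OF that] .
    show "vb l > 0" if "l \<in> {0<..<1}" for l using vbpos that by simp
    show "(dv - (\<sigma> (v + dv) - \<sigma> v)) * ((\<sigma> (v + dv) - \<sigma> v) - l * dv) \<ge> 0"
      if "l \<in> {0<..<1}" "v \<in> {- vb l..vb l} \<and> v + dv \<in> {- vb l..vb l}" for l v dv
      using part1[OF that] .
    show "(dv - (\<sigma> (v + dv) - \<sigma> v)) * (\<sigma> (v + dv) - \<sigma> v) \<ge> 0" for v dv
      by (rule part2)
  qed
qed

end
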